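(* Let $D$ be a regular semisimple matrix in $\mathrm{SL}_n(\mathbf k)$ with no eigenvalue equal to $1$, and let $P\subset\mathrm{SL}_n$ be the parabolic subgroup fixing a line $l\subset\mathbf k^n$, with unipotent radical $U_P$. If there exist matrices $M,N$ with $M$ unipotent, $N\in U_P(\mathbf k)$ and $NM=D$, then $l$ contains a cyclic vector for $D$. Moreover, for a given $l$, such a pair $(M,N)$, if it exists, is unique.
   Context: $\mathbf k$ is an algebraically closed field. A vector $v$ is cyclic for $D$ if $v,Dv,\dots,D^{n-1}v$ span $\mathbf k^n$. *)

theory Defs
  imports "HOL-Analysis.Analysis" "HOL-Computational_Algebra.Polynomial"
begin

definition alg_closed :: "'k::field itself \<Rightarrow> bool" where
  "alg_closed _ \<longleftrightarrow> (\<forall>p::'k poly. degree p \<ge> 1 \<longrightarrow> (\<exists>x. poly p x = 0))"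

(* Matrix power A^m (the HOL-Analysis vector type carries a componentwise
   multiplication, so we define the genuine matrix power explicitly). *)
definition matpow :: "'k::field^'n^'n \<Rightarrow> nat \<Rightarrow> 'k^'n^'n" where
  "matpow A m = ((\<lambda>X. X ** A) ^^ m) (mat 1)"

definition eigenvalue :: "'k::field^'n^'n \<Rightarrow> 'k \<Rightarrow> bool" where
  "eigenvalue A c \<longleftrightarrow> (\<exists>v. v \<noteq> 0 \<and> A *v v = c *s v)"

definition regular_semisimple :: "'k::field^'n^'n \<Rightarrow> bool" where
  "regular_semisimple A \<longleftrightarrow>
     (\<exists>Q Q' (d::'n \<Rightarrow> 'k). Q ** Q' = mat 1 \<and> Q' ** Q = mat 1
            \<and> Q' ** A ** Q = (\<chi> i j. if i = j then d i else 0) \<and> inj d)"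

definition unipotent :: "'k::field^'n^'n \<Rightarrow> bool" where
  "unipotent A \<longleftrightarrow> (\<exists>m. matpow (A - mat 1) m = 0)"

definition cyclic_vector :: "'k::field^'n^'n \<Rightarrow> 'k^'n \<Rightarrow> bool" where
  "cyclic_vector A v \<longleftrightarrow> vec.span {matpow A i *v v | i. i < CARD('n)} = UNIV"

definition parabolic_line :: "('k::field^'n) set \<Rightarrow> ('k^'n^'n) set" where
  "parabolic_line l = {g. det g = 1 \<and> (\<lambda>v. g *v v) ` l = l}"

(* Its unipotent radical: elements acting trivially on l and on k^n / l *)
definition unip_radical :: "('k::field^'n) set \<Rightarrow> ('k^'n^'n) set" where
  "unip_radical l = {g \<in> parabolic_line l.
      (\<forall>v. g *v v - v \<in> l) \<and> (\<forall>v\<in>l. g *v v = v)}"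

end

theory Submission imports Defs begin

lemma matpow_Suc: "matpow A (Suc m) = matpow A m ** A"
  by (simp add: matpow_def)

lemma matpow_comm: "matpow A m ** A = A ** matpow A m"
proof (induction m)
  case 0 then show ?case by (simp add: matpow_def)
next
  case (Suc m)
  have "matpow A (Suc m) ** A = (A ** matpow A m) ** A" using Suc by (simp add: matpow_Suc)
  also have "... = A ** matpow A (Suc m)" by (simp add: matpow_Suc matrix_mul_assoc)
  finally show ?case .
qed

lemma matpow_Suc_vec: "matpow A (Suc m) *v w = A *v (matpow A m *v w)"
  by (simp add: matpow_Suc matpow_comm matrix_vector_mul_assoc)

lemma krylov_span:
  fixes A :: "'k::field^'n^'n" and w :: "'k^'n"
  shows "vec.span (range (\<lambda>i. matpow A i *v w)) = vec.span ((\<lambda>i. matpow A i *v w) ` {..<CARD('n)})"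
proof -
  define f where "f = (\<lambda>i. matpow A i *v w)"
  have fS: "f (Suc i) = A *v f i" for i by (simp add: f_def matpow_Suc_vec)
  have "\<exists>k\<le>CARD('n). f k \<in> vec.span (f ` {..<k})"
  proof (rule ccontr)
    assume H: "\<not> ?thesis"
    have "vec.independent (f ` {..<k}) \<and> inj_on f {..<k}" if "k \<le> Suc CARD('n)" for k
      using that
    proof (induction k)
      case 0 then show ?case by (simp add: vec.independent_empty)
    next
      case (Suc k)
      have nk: "f k \<notin> vec.span (f ` {..<k})" using H Suc.prems by auto
      have e: "{..<Suc k} = insert k {..<k}" by auto
      have fk: "f k \<notin> f ` {..<k}"
      proof
        assume "f k \<in> f ` {..<k}"
        then have "f k \<in> vec.span (f ` {..<k})" by (rule vec.span_base)
        with nk show False by contradiction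
      qed
      have IH: "vec.independent (f ` {..<k})" "inj_on f {..<k}" using Suc.IH Suc.prems by auto
      have i1: "vec.independent (f ` {..<Suc k})"
        unfolding e image_insert by (rule vec.independent_insertI[OF nk IH(1)])
      have i2: "inj_on f {..<Suc k}"
        unfolding e using IH(2) fk by simp
      show ?case using i1 i2 by blast
    qed
    then have "vec.independent (f ` {..<Suc CARD('n)})" "inj_on f {..<Suc CARD('n)}" by auto
    then have "card (f ` {..<Suc CARD('n)}) \<le> vec.dim (UNIV :: ('k^'n) set)"
      using vec.independent_card_le_dim by blast
    moreover have "card (f ` {..<Suc CARD('n)}) = Suc CARD('n)"
      using \<open>inj_on f _\<close> by (simp add: card_image)
    ultimately show False by (simp add: vec.dim_UNIV card_cart_basis)
  qed
  then obtain k where k: "k \<le> CARD('n)" "f k \<in> vec.span (f ` {..<k})" by blast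
  let ?S = "vec.span (f ` {..<k})"
  have inv: "A *v x \<in> ?S" if "x \<in> ?S" for x
  proof -
    have "A *v x \<in> (*v) A ` ?S" using that by blast
    also have "\<dots> = vec.span ((*v) A ` f ` {..<k})" by (simp add: vec.span_image)
    also have "\<dots> \<subseteq> ?S"
    proof (rule vec.span_minimal)
      show "(*v) A ` f ` {..<k} \<subseteq> ?S"
      proof
        fix y assume "y \<in> (*v) A ` f ` {..<k}"
        then obtain i where i: "i < k" "y = f (Suc i)" by (auto simp: fS)
        show "y \<in> ?S"
        proof (cases "Suc i < k")
          case True then show ?thesis using i by (auto intro: vec.span_base)
        next
          case False then have "Suc i = k" using i by auto
          then show ?thesis using i k by simp
        qed
      qed
    qed simp
    finally show ?thesis .
  qed
  have all: "f j \<in> ?S" for j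
  proof (induction j)
    case 0 then show ?case using k by (cases "k = 0") (auto intro: vec.span_base)
  next
    case (Suc j) then show ?case using inv fS by simp
  qed
  have "vec.span (range f) \<subseteq> ?S" using all by (intro vec.span_minimal) auto
  also have "?S \<subseteq> vec.span (f ` {..<CARD('n)})" using k(1) by (intro vec.span_mono) auto
  finally have "vec.span (range f) \<subseteq> vec.span (f ` {..<CARD('n)})" .
  moreover have "vec.span (f ` {..<CARD('n)}) \<subseteq> vec.span (range f)" by (intro vec.span_mono) auto
  ultimately show ?thesis unfolding f_def by blast
qed


lemma seq_zero:
  fixes a d :: "nat \<Rightarrow> 'k::field"
  assumes rec: "\<And>r. a r = d r + (\<Sum>s<r. a s * d (r - 1 - s))"
    and az: "\<And>r. r \<ge> N \<Longrightarrow> a r = 0" and dz: "\<And>j. j \<ge> N \<Longrightarrow> d j = 0"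
  shows "d j = 0"
proof (rule ccontr)
  assume "d j \<noteq> 0"
  define t where "t = Max {j. d j \<noteq> 0}"
  have "{j. d j \<noteq> 0} \<subseteq> {..<N}"
  proof
    fix j assume "j \<in> {j. d j \<noteq> 0}" then show "j \<in> {..<N}" using dz[of j] by (cases "j \<ge> N") auto
  qed
  then have fin: "finite {j. d j \<noteq> 0}" by (rule finite_subset) simp
  have "t \<in> {j. d j \<noteq> 0}" unfolding t_def by (rule Max_in[OF fin]) (use \<open>d j \<noteq> 0\<close> in blast)
  then have dt: "d t \<noteq> 0" by simp
  have dgt: "d i = 0" if "i > t" for i
  proof (rule ccontr)
    assume "d i \<noteq> 0" then have "i \<le> t" unfolding t_def by (intro Max_ge[OF fin]) simp
    with that show False by simp
  qed
  show False
  proof (cases "\<exists>r. a r \<noteq> 0")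
    case False
    then have "a t = d t" using rec[of t] by simp
    then show False using False dt by simp
  next
    case True
    have "{j. a j \<noteq> 0} \<subseteq> {..<N}"
    proof
      fix j assume "j \<in> {j. a j \<noteq> 0}" then show "j \<in> {..<N}" using az[of j] by (cases "j \<ge> N") auto
    qed
    then have finA: "finite {r. a r \<noteq> 0}" by (rule finite_subset) simp
    define P where "P = Max {r. a r \<noteq> 0}"
    have "P \<in> {r. a r \<noteq> 0}" unfolding P_def by (rule Max_in[OF finA]) (use True in blast)
    then have aP: "a P \<noteq> 0" by simp
    have agt: "a i = 0" if "i > P" for i
    proof (rule ccontr)
      assume "a i \<noteq> 0" then have "i \<le> P" unfolding P_def by (intro Max_ge[OF finA]) simp
      with that show False by simp
    qed
    let ?F = "\<lambda>s. a s * d (P + t + 1 - 1 - s)"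
    have z: "(\<Sum>s\<in>{..<P+t+1}-{P}. ?F s) = 0"
    proof (rule sum.neutral, rule ballI)
      fix i assume "i \<in> {..<P + t + 1} - {P}"
      then have "i > P \<or> i < P" by auto
      then show "?F i = 0"
      proof
        assume "i > P" then show ?thesis using agt[of i] by simp
      next
        assume "i < P" then have "P + t + 1 - 1 - i > t" by simp
        then show ?thesis using dgt by simp
      qed
    qed
    have "(\<Sum>s<P+t+1. ?F s) = ?F P + (\<Sum>s\<in>{..<P+t+1}-{P}. ?F s)"
      by (rule sum.remove) auto
    then have "(\<Sum>s<P+t+1. ?F s) = a P * d t" using z by simp
    then have "a (P+t+1) = a P * d t" using rec[of "P+t+1"] dgt[of "P+t+1"] by simp
    then show False using agt[of "P+t+1"] aP dt by simp
  qed
qed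

lemma span_inv:
  fixes A :: "'k::field^'n^'n"
  assumes "x \<in> vec.span (range (\<lambda>i. matpow A i *v w))"
  shows "A *v x \<in> vec.span (range (\<lambda>i. matpow A i *v w))"
proof -
  let ?S = "vec.span (range (\<lambda>i. matpow A i *v w))"
  have "A *v x \<in> (*v) A ` ?S" using assms by blast
  also have "\<dots> = vec.span ((*v) A ` range (\<lambda>i. matpow A i *v w))" by (simp add: vec.span_image)
  also have "\<dots> \<subseteq> ?S"
    by (rule vec.span_mono) (auto simp: matpow_Suc_vec[symmetric])
  finally show ?thesis .
qed

lemma matpow_zero_ge:
  assumes "matpow X m = 0" "n \<ge> m" shows "matpow X n = 0"
  using assms(2)
proof (induction n rule: dec_induct)
  case base then show ?case using assms(1) .
next
  case (step n) then show ?case by (simp add: matpow_Suc)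
qed

lemma part1:
  fixes D M N :: "'k::field^'n^'n" and w :: "'k^'n"
  assumes noeig: "\<not> eigenvalue D 1" and l: "l = vec.span {w}"
    and uM: "unipotent M" and N: "N \<in> unip_radical l" and NM: "N ** M = D"
  shows "vec.span (range (\<lambda>i. matpow D i *v w)) = UNIV"
proof (rule ccontr)
  let ?W = "vec.span (range (\<lambda>i. matpow D i *v w))"
  assume "?W \<noteq> UNIV"
  then obtain v where v: "v \<notin> ?W" by blast
  have Dinv: "D *v x \<in> ?W" if "x \<in> ?W" for x using span_inv that by blast
  have diff: "D *v x - M *v x \<in> l" for x
  proof -
    have "N *v (M *v x) - M *v x \<in> l" using N unfolding unip_radical_def by blast
    then show ?thesis using NM by (simp add: matrix_vector_mul_assoc)
  qed
  have "w \<in> ?W" by (rule vec.span_base) (auto intro!: range_eqI[of _ _ 0] simp: matpow_def)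
  then have lW: "l \<subseteq> ?W" unfolding l by (intro vec.span_minimal) auto
  have Minv: "M *v x \<in> ?W" if "x \<in> ?W" for x
  proof -
    have e: "M *v x = D *v x - (D *v x - M *v x)" by simp
    have "D *v x - M *v x \<in> ?W" using diff lW by blast
    from vec.span_diff[OF Dinv[OF that] this] show ?thesis by (subst e)
  qed
  obtain m where m: "matpow (M - mat 1) m = 0" using uM unfolding unipotent_def by blast
  define g where "g j = matpow (M - mat 1) j *v v" for j
  have "g m \<in> ?W" by (simp add: g_def m vec.span_zero)
  define j where "j = (LEAST j. g j \<in> ?W)"
  have gj: "g j \<in> ?W" unfolding j_def by (rule LeastI) fact
  have "g 0 = v" by (simp add: g_def matpow_def)
  then have "j \<noteq> 0" using gj v by (metis (no_types))
  then obtain i where i: "j = Suc i" by (cases j) auto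
  have u: "g i \<notin> ?W"
  proof
    assume "g i \<in> ?W"
    then have "j \<le> i" unfolding j_def by (rule Least_le)
    with i show False by simp
  qed
  have Au: "(M - mat 1) *v g i \<in> ?W" using gj i by (simp add: g_def matpow_Suc_vec)
  have eqB: "(D - mat 1) *v g i = (D *v g i - M *v g i) + (M - mat 1) *v g i"
    by (simp add: matrix_vector_mult_diff_rdistrib)
  have h: "D *v g i - M *v g i \<in> ?W" using diff lW by blast
  have Bu: "(D - mat 1) *v g i \<in> ?W" by (subst eqB) (rule vec.span_add[OF h Au])
  let ?B = "(*v) (D - mat 1)"
  have injB: "inj ?B"
  proof (subst vec.inj_iff_eq_0, intro allI impI)
    fix x assume "(D - mat 1) *v x = 0"
    then have "D *v x = 1 *s x" by (simp add: matrix_vector_mult_diff_rdistrib)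
    then show "x = 0" using noeig unfolding eigenvalue_def by blast
  qed
  have BW: "?B ` ?W \<subseteq> ?W"
  proof
    fix y assume "y \<in> ?B ` ?W"
    then obtain x where x: "x \<in> ?W" "y = (D - mat 1) *v x" by blast
    then have yeq: "y = D *v x - x" by (simp add: matrix_vector_mult_diff_rdistrib)
    show "y \<in> ?W" by (subst yeq) (rule vec.span_diff[OF Dinv[OF x(1)] x(1)])
  qed
  have "vec.dim (?B ` ?W) = vec.dim ?W"
    by (rule vec.dim_image_eq[OF matrix_vector_mul_linear_gen inj_on_subset[OF injB subset_UNIV]])
  then have "?B ` ?W = ?W"
    by (intro vec.subspace_dim_equal[OF vec.subspace_image[OF vec.subspace_span] vec.subspace_span BW]) simp
  with Bu have "?B (g i) \<in> ?B ` ?W" by simp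
  then obtain u' where u': "u' \<in> ?W" "?B (g i) = ?B u'" by blast
  have gu: "g i = u'" by (rule injD[OF injB u'(2)])
  from u'(1) have "g i \<in> ?W" by (subst gu)
  with u show False by contradiction
qed


lemma radical_diff:
  assumes N: "N \<in> unip_radical l" and NM: "N ** M = D"
  shows "D *v x - M *v x \<in> l"
proof -
  have "N *v (M *v x) - M *v x \<in> l" using N unfolding unip_radical_def by blast
  then show ?thesis using NM by (simp add: matrix_vector_mul_assoc)
qed

lemma part2:
  fixes D M N M' N' :: "'k::field^'n^'n" and w :: "'k^'n"
  assumes l: "l = vec.span {w}" and w0: "w \<noteq> 0"
    and span: "vec.span (range (\<lambda>i. matpow D i *v w)) = UNIV"
    and uM: "unipotent M" and N: "N \<in> unip_radical l" and NM: "N ** M = D"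
    and uM': "unipotent M'" and N': "N' \<in> unip_radical l" and NM': "N' ** M' = D"
  shows "M = M'"
proof -
  define E where "E = M' - M"
  have Ex: "E *v x \<in> l" for x
  proof -
    have "(D *v x - M *v x) - (D *v x - M' *v x) \<in> l"
      unfolding l by (rule vec.span_diff) (use radical_diff[OF N NM] radical_diff[OF N' NM'] l in auto)
    moreover have "(D *v x - M *v x) - (D *v x - M' *v x) = E *v x"
      by (simp add: E_def matrix_vector_mult_diff_rdistrib)
    ultimately show ?thesis by simp
  qed
  obtain k where wk: "w $ k \<noteq> 0" using w0 by (metis vec_eq_iff zero_index)
  define e where "e x = (E *v x) $ k / w $ k" for x
  have Ee: "E *v x = e x *s w" for x
  proof -
    obtain c where c: "E *v x = c *s w" using Ex[of x] unfolding l vec.span_singleton by blast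
    then have "e x = c" unfolding e_def using wk by simp
    then show ?thesis using c by simp
  qed
  have e_add: "e (x + y) = e x + e y" for x y
    unfolding e_def by (simp add: vec.add add_divide_distrib)
  have e_scale: "e (c *s x) = c * e x" for c x
    unfolding e_def by (simp add: vec.scale)
  have e_zero: "e 0 = 0" unfolding e_def by simp
  have e_sum: "e (sum g S) = (\<Sum>s\<in>S. e (g s))" if "finite S" for g and S :: "nat set"
    using that
  proof (induction S rule: finite_induct)
    case empty then show ?case by (simp add: e_zero)
  next
    case (insert x F) then show ?case by (simp add: e_add)
  qed
  define A where "A = M - mat 1"
  define A' where "A' = M' - mat 1"
  have AA': "A' = A + E" unfolding A_def A'_def E_def by simp
  obtain m where m: "matpow A m = 0" using uM unfolding unipotent_def A_def by blast
  obtain m' where m': "matpow A' m' = 0" using uM' unfolding unipotent_def A'_def by blast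
  define f where "f r = matpow A r *v w" for r
  define f' where "f' r = matpow A' r *v w" for r
  have fS: "f (Suc r) = A *v f r" for r by (simp add: f_def matpow_Suc_vec)
  have f'S: "f' (Suc r) = A' *v f' r" for r by (simp add: f'_def matpow_Suc_vec)
  have f0: "f 0 = w" by (simp add: f_def matpow_def)
  define a where "a r = e (f' r)" for r
  define d where "d j = e (f j)" for j
  have claim: "f' r = f r + (\<Sum>s<r. a s *s f (r - 1 - s))" for r
  proof (induction r)
    case 0 then show ?case by (simp add: f_def f'_def matpow_def)
  next
    case (Suc r)
    have "f' (Suc r) = A *v f' r + a r *s w"
      by (simp add: f'S AA' matrix_vector_mult_add_rdistrib Ee a_def)
    also have "A *v f' r = f (Suc r) + (\<Sum>s<r. a s *s f (r - s))"
    proof -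
      have "A *v f' r = A *v f r + (\<Sum>s<r. a s *s (A *v f (r - 1 - s)))"
        by (simp add: Suc.IH vec.add vec.sum vec.scale)
      also have "(\<Sum>s<r. a s *s (A *v f (r - 1 - s))) = (\<Sum>s<r. a s *s f (r - s))"
      proof (rule sum.cong)
        fix s assume "s \<in> {..<r}"
        then have "Suc (r - 1 - s) = r - s" by simp
        then show "a s *s (A *v f (r - 1 - s)) = a s *s f (r - s)" by (metis fS)
      qed simp
      finally show ?thesis by (simp add: fS)
    qed
    also have "f (Suc r) + (\<Sum>s<r. a s *s f (r - s)) + a r *s w = f (Suc r) + (\<Sum>s<Suc r. a s *s f (Suc r - 1 - s))"
      by (simp add: f0 add.assoc)
    finally show ?case .
  qed
  have rec: "a r = d r + (\<Sum>s<r. a s * d (r - 1 - s))" for r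
  proof -
    have "a r = e (f r + (\<Sum>s<r. a s *s f (r - 1 - s)))" by (simp only: a_def[of r] claim[of r])
    also have "\<dots> = d r + (\<Sum>s<r. a s * d (r - 1 - s))"
      by (simp add: e_add e_sum e_scale d_def)
    finally show ?thesis .
  qed
  have az: "a r = 0" if "r \<ge> m + m'" for r
  proof -
    have "matpow A' r = 0" by (rule matpow_zero_ge[OF m']) (use that in simp)
    then show ?thesis by (simp add: a_def f'_def e_zero)
  qed
  have dz: "d r = 0" if "r \<ge> m + m'" for r
  proof -
    have "matpow A r = 0" by (rule matpow_zero_ge[OF m]) (use that in simp)
    then show ?thesis by (simp add: d_def f_def e_zero)
  qed
  have d0: "d j = 0" for j by (rule seq_zero[OF rec az dz])
  have Ef: "E *v f j = 0" for j using d0[of j] by (simp add: Ee d_def)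
  let ?K = "vec.span (range f)"
  have Kinv: "A *v x \<in> ?K" if "x \<in> ?K" for x
    using span_inv[of x A w] that unfolding f_def by simp
  have "w \<in> ?K" using f0 by (metis rangeI vec.span_base)
  then have lK: "l \<subseteq> ?K" unfolding l by (intro vec.span_minimal) auto
  have DK: "D *v x \<in> ?K" if x: "x \<in> ?K" for x
  proof -
    have eq: "D *v x = (A *v x + x) + (D *v x - M *v x)"
      by (simp add: A_def matrix_vector_mult_diff_rdistrib)
    have h1: "A *v x + x \<in> ?K" by (rule vec.span_add[OF Kinv[OF x] x])
    have h2: "D *v x - M *v x \<in> ?K" using radical_diff[OF N NM] lK by blast
    show ?thesis by (subst eq) (rule vec.span_add[OF h1 h2])
  qed
  have Dj: "matpow D j *v w \<in> ?K" for j
  proof (induction j)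
    case 0 then show ?case using \<open>w \<in> ?K\<close> by (simp add: matpow_def)
  next
    case (Suc j) then show ?case using DK by (simp add: matpow_Suc_vec)
  qed
  have "UNIV \<subseteq> ?K" unfolding span[symmetric]
    by (rule vec.span_minimal) (use Dj in auto)
  moreover have "?K \<subseteq> {x. E *v x = 0}"
    by (rule vec.span_minimal) (use Ef vec.subspace_kernel in auto)
  ultimately have "E *v x = 0" for x by blast
  then have "M' *v x = M *v x" for x unfolding E_def by (simp add: matrix_vector_mult_diff_rdistrib)
  then show ?thesis by (simp add: matrix_eq)
qed

lemma unipotent_inj:
  fixes M :: "'k::field^'n^'n"
  assumes "unipotent M" shows "\<exists>B. M ** B = mat 1"
proof -
  obtain m where m: "matpow (M - mat 1) m = 0" using assms unfolding unipotent_def by blast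
  have "inj ((*v) M)"
  proof (subst vec.inj_iff_eq_0, intro allI impI)
    fix x assume Mx: "M *v x = 0"
    then have Ax: "(M - mat 1) *v x = (- 1) *s x" by (simp add: matrix_vector_mult_diff_rdistrib)
    have "matpow (M - mat 1) j *v x = ((- 1) ^ j) *s x" for j
    proof (induction j)
      case 0 then show ?case by (simp add: matpow_def)
    next
      case (Suc j)
      have "matpow (M - mat 1) (Suc j) *v x = (M - mat 1) *v (matpow (M - mat 1) j *v x)"
        by (simp add: matpow_Suc_vec)
      also have "\<dots> = ((- 1) ^ Suc j) *s x" by (simp add: Suc.IH vec.scale Ax)
      finally show ?case .
    qed
    from this[of m] have "((- 1) ^ m) *s x = 0" using m by simp
    then show "x = 0" by (simp add: vec.scale_eq_0_iff)
  qed
  then obtain B where "B ** M = mat 1" using matrix_left_invertible_injective by blast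
  then show ?thesis using matrix_left_right_inverse by blast
qed


theorem mainTheorem12:
  fixes D :: "'k::field^'n^'n" and l :: "('k^'n) set"
  assumes "alg_closed TYPE('k)"
    and "det D = 1"
    and "regular_semisimple D"
    and "\<not> eigenvalue D 1"
    and "vec.subspace l" and "vec.dim l = 1"
  shows "((\<exists>M N. unipotent M \<and> N \<in> unip_radical l \<and> N ** M = D)
            \<longrightarrow> (\<exists>v\<in>l. cyclic_vector D v))
       \<and> (\<forall>M N M' N'. unipotent M \<and> N \<in> unip_radical l \<and> N ** M = D
            \<and> unipotent M' \<and> N' \<in> unip_radical l \<and> N' ** M' = D
            \<longrightarrow> M = M' \<and> N = N')"
proof -
  obtain B where B: "B \<subseteq> l" "vec.independent B" "l \<subseteq> vec.span B" "card B = vec.dim l"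
    using vec.basis_exists[of l] by blast
  then obtain w where Bw: "B = {w}" using assms(6) card_1_singletonE by metis
  have wl: "w \<in> l" using B(1) Bw by simp
  have w0: "w \<noteq> 0" using B(2) Bw vec.dependent_zero by blast
  have l: "l = vec.span {w}"
  proof
    show "l \<subseteq> vec.span {w}" using B(3) Bw by simp
    show "vec.span {w} \<subseteq> l" by (rule vec.span_minimal) (use wl assms(5) in auto)
  qed
  have P1: "vec.span (range (\<lambda>i. matpow D i *v w)) = UNIV"
    if "unipotent M" "N \<in> unip_radical l" "N ** M = D" for M N
    by (rule part1[OF assms(4) l that])
  show ?thesis
  proof (intro conjI impI allI)
    assume "\<exists>M N. unipotent M \<and> N \<in> unip_radical l \<and> N ** M = D"
    then obtain M N where MN: "unipotent M" "N \<in> unip_radical l" "N ** M = D" by blast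
    have "vec.span ((\<lambda>i. matpow D i *v w) ` {..<CARD('n)}) = UNIV"
      using P1[OF MN] krylov_span[of D w] by simp
    moreover have "{matpow D i *v w | i. i < CARD('n)} = (\<lambda>i. matpow D i *v w) ` {..<CARD('n)}"
      by auto
    ultimately have "cyclic_vector D w" unfolding cyclic_vector_def by simp
    then show "\<exists>v\<in>l. cyclic_vector D v" using wl by blast
  next
    fix M N M' N'
    assume H: "unipotent M \<and> N \<in> unip_radical l \<and> N ** M = D
            \<and> unipotent M' \<and> N' \<in> unip_radical l \<and> N' ** M' = D"
    then have H1: "unipotent M" "N \<in> unip_radical l" "N ** M = D"
      and H2: "unipotent M'" "N' \<in> unip_radical l" "N' ** M' = D" by auto
    have MM: "M = M'" by (rule part2[OF l w0 P1[OF H1] H1 H2])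
    then show "M = M'" .
    obtain C where C: "M ** C = mat 1" using unipotent_inj[OF H1(1)] by blast
    have "N = N ** (M ** C)" using C by simp
    also have "\<dots> = D ** C" using H1(3) by (simp add: matrix_mul_assoc)
    also have "\<dots> = N' ** (M' ** C)" using H2(3) by (simp add: matrix_mul_assoc)
    also have "\<dots> = N'" using C MM by simp
    finally show "N = N'" .
  qed
qed

end
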